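(* Let $n,N\ge1$, and let $H:\mathbb{R}^{2n}\times\mathbb{R}^{2N}\to\mathbb{R}$ be a $C^{1,1}$ function (i.e. $C^1$ with Lipschitz derivative) of the form $H(z,\zeta)=H_0(z)+\kappa\Lambda(z,\zeta)$, $\kappa>0$, such that $\Lambda\ge0$ and $\Lambda(z,\zeta)=0$ iff $\zeta=0$; there are $c_0,c_1,p>0$ with $H(z,\zeta)\ge c_0(|z|^p+\kappa|\zeta|^p)-c_1$; and for all $R>0$ there is $c_2(R)>0$ with $|\frac{\partial\Lambda}{\partial z}(z,\zeta)|\le c_2(R)\Lambda(z,\zeta)$ for $|z|\le R$; the numbers $c_0,c_1,c_2(R),p$ are independent of $\kappa$. Let real initial data $(z^\kappa(0),\zeta^\kappa(0))$ be given for $\kappa\ge\kappa_0$ such that (i) $z^\kappa(0)\to z(0)$ as $\kappa\to+\infty$; (ii) $\kappa\Lambda(z^\kappa(0),\zeta^\kappa(0))\to0$ as $\kappa\to+\infty$; (iii) $\sup_{\kappa\ge\kappa_0}H(z^\kappa(0),\zeta^\kappa(0))=E<\infty$. Then for each $\kappa\ge\kappa_0$ there exist global integral curves $(z^\kappa(t),\zeta^\kappa(t))$ of $H$ with these initial data such that for every $T>0$ \[ \lim_{\kappa\to+\infty}\max_{|t|\le T}\big(|z^\kappa(t)-z(t)|+|\zeta^\kappa(t)|\big)=0, \] where $z(t)$ is the integral curve of the Hamiltonian $H(z,0)=H_0(z)$ on $\mathbb{R}^{2n}$ with initial value $z(0)$; furthermore \[ \lim_{\kappa\to+\infty}\max_{|t|\le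 T}\Big(|H_0(z^\kappa(t))-H_0(z^\kappa(0))|+\kappa\Lambda(z^\kappa(t),\zeta^\kappa(t))\Big)=0. \]
   Context: $|z|,|\zeta|$ are Euclidean norms. The phase spaces carry the standard symplectic structures in Darboux coordinates $z_j=(x_j,y_j)$, $\zeta_j=(\xi_j,\eta_j)$; integral curves are those of the Hamiltonian vector field. *)

theory Defs
  imports "HOL-Analysis.Analysis"
begin

text \<open>Standard symplectic structure in Darboux coordinates: a point of the
  phase space is a pair (x, y); the Hamiltonian vector field of H is
  (dH/dy, -dH/dx), i.e. J applied to the gradient, with J (a, b) = (b, -a).\<close>
definition sympJ :: "('a::real_vector \<times> 'a) \<Rightarrow> 'a \<times> 'a" where
  "sympJ w = (snd w, - fst w)"

definition sympJ2 :: "(('a::real_vector \<times> 'a) \<times> ('b::real_vector \<times> 'b))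
    \<Rightarrow> ('a \<times> 'a) \<times> ('b \<times> 'b)" where
  "sympJ2 w = (sympJ (fst w), sympJ (snd w))"

definition C11 :: "('a::real_inner \<Rightarrow> real) \<Rightarrow> bool" where
  "C11 f \<longleftrightarrow> (\<exists>g L. (\<forall>w. (f has_derivative (\<lambda>h. g w \<bullet> h)) (at w)) \<and>
                       (\<forall>v w. norm (g v - g w) \<le> L * norm (v - w)))"

definition ham_curve :: "('p::real_inner \<Rightarrow> real) \<Rightarrow> ('p \<Rightarrow> 'p) \<Rightarrow> (real \<Rightarrow> 'p) \<Rightarrow> bool" where
  "ham_curve H J \<gamma> \<longleftrightarrow>
     (\<forall>t. \<exists>g. (H has_derivative (\<lambda>h. g \<bullet> h)) (at (\<gamma> t)) \<and>
              (\<gamma> has_vector_derivative J g) (at t))"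

end

theory Submission
  imports Defs
begin


definition sint :: "(real \<Rightarrow> 'a::banach) \<Rightarrow> real \<Rightarrow> 'a" where
  "sint h t = (if 0 \<le> t then integral {0..t} h else - integral {t..0} h)"

lemma sint_0[simp]: "sint h 0 = 0"
  by (simp add: sint_def)

lemma sint_deriv:
  assumes c: "continuous_on UNIV h"
  shows "(sint h has_vector_derivative h t) (at t)"
proof -
  define a where "a = min t 0 - 1"
  define b where "b = max t 0 + 1"
  have ch: "continuous_on {a..b} h" by (rule continuous_on_subset[OF c]) simp
  have eq: "sint h s = integral {a..s} h - integral {a..0} h" if "s \<in> {a<..<b}" for s
  proof (cases "0 \<le> s")
    case True
    have "integral {a..0} h + integral {0..s} h = integral {a..s} h"
      proof (rule Henstock_Kurzweil_Integration.integral_combine)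
      show "h integrable_on {a..s}" by (rule integrable_continuous_real[OF continuous_on_subset[OF c]]) simp
    next
      show "a \<le> 0" by (simp add: a_def)
    next
      show "0 \<le> s" by (rule True)
    qed
    then show ?thesis using True by (simp add: sint_def algebra_simps)
  next
    case False
    have "integral {a..s} h + integral {s..0} h = integral {a..0} h"
      proof (rule Henstock_Kurzweil_Integration.integral_combine)
      show "h integrable_on {a..0}" by (rule integrable_continuous_real[OF continuous_on_subset[OF c]]) simp
    next
      show "a \<le> s" using that by (simp add: a_def)
    next
      show "s \<le> 0" using False by simp
    qed
    then show ?thesis using False by (simp add: sint_def algebra_simps)
  qed
  have tin: "t \<in> {a<..<b}" by (auto simp: a_def b_def)
  have "((\<lambda>s. integral {a..s} h) has_vector_derivative h t) (at t within {a..b})"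
    using tin by (intro integral_has_vector_derivative ch) auto
  then have "((\<lambda>s. integral {a..s} h) has_vector_derivative h t) (at t within {a<..<b})"
    by (rule has_vector_derivative_within_subset) (rule greaterThanLessThan_subseteq_atLeastAtMost_iff[THEN iffD2], simp)
  then have "((\<lambda>s. integral {a..s} h) has_vector_derivative h t) (at t)"
    using has_vector_derivative_within_open[OF tin open_greaterThanLessThan] by blast
  then have "((\<lambda>s. integral {a..s} h - integral {a..0} h) has_vector_derivative h t) (at t)"
    using has_vector_derivative_diff[OF _ has_vector_derivative_const] by fastforce
  then show ?thesis
  proof (rule has_vector_derivative_transform_within_open[where S="{a<..<b}"])
    show "open {a<..<b}" by simp
    show "t \<in> {a<..<b}" by (rule tin)
    fix y assume "y \<in> {a<..<b}"
    then show "integral {a..y} h - integral {a..0} h = sint h y" using eq by simp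
  qed
qed

lemma deriv_cont_on:
  assumes "\<And>t. (f has_vector_derivative f' t) (at t)"
  shows "continuous_on UNIV f"
  using assms by (meson continuous_at_imp_continuous_on has_vector_derivative_continuous)

lemma lip_cont:
  fixes F :: "'a::real_normed_vector \<Rightarrow> 'b::real_normed_vector"
  assumes "\<And>x y. norm (F x - F y) \<le> L * norm (x - y)"
  shows "continuous_on UNIV F"
proof -
  show ?thesis
    unfolding continuous_on_iff
  proof (intro ballI allI impI)
    fix x and e :: real assume "0 < e"
    show "\<exists>d>0. \<forall>x'\<in>UNIV. dist x' x < d \<longrightarrow> dist (F x') (F x) < e"
    proof (intro exI[of _ "e / (\<bar>L\<bar> + 1)"] conjI ballI impI)
      show "0 < e / (\<bar>L\<bar> + 1)" using \<open>0<e\<close> by auto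
      fix x' assume "dist x' x < e / (\<bar>L\<bar> + 1)"
      then have "(\<bar>L\<bar> + 1) * dist x' x < e" by (simp add: field_simps)
      moreover have "dist (F x') (F x) \<le> (\<bar>L\<bar> + 1) * dist x' x"
        using assms[of x' x] by (simp add: dist_norm) (smt (verit) mult_right_mono norm_ge_zero)
      ultimately show "dist (F x') (F x) < e" by linarith
    qed
  qed
qed



lemma poly_bound:
  fixes \<delta> :: "real \<Rightarrow> 'a::real_normed_vector"
  assumes d: "\<And>s. (\<delta> has_vector_derivative \<delta>' s) (at s)"
    and d0: "\<delta> 0 = 0"
    and B: "\<And>s. \<bar>s\<bar> \<le> \<bar>t\<bar> \<Longrightarrow> norm (\<delta>' s) \<le> B * \<bar>s\<bar> ^ k / fact k"
  shows "norm (\<delta> t) \<le> B * \<bar>t\<bar> ^ Suc k / fact (Suc k)"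
proof -
  have cont: "continuous_on S \<delta>" for S
    using deriv_cont_on[OF d] continuous_on_subset by blast
  consider "t = 0" | "0 < t" | "t < 0" by linarith
  then show ?thesis
  proof cases
    case 1 then show ?thesis using d0 by simp
  next
    case 2
    define \<phi> where "\<phi> s = (B / fact (Suc k)) * s ^ Suc k" for s
    have "norm (\<delta> t - \<delta> 0) \<le> \<phi> t - \<phi> 0"
    proof (rule differentiable_bound_general[OF 2 cont, of \<phi> \<delta>' "\<lambda>s. B * s ^ k / fact k"])
      show "continuous_on {0..t} \<phi>" unfolding \<phi>_def by (intro continuous_intros) auto
      fix x assume x: "0 < x" "x < t"
      show "(\<delta> has_vector_derivative \<delta>' x) (at x)" by (rule d)
      have "(\<phi> has_real_derivative (B / fact (Suc k)) * (real (Suc k) * x ^ k)) (at x)"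
        unfolding \<phi>_def by (rule DERIV_cmult) (use DERIV_pow[of "Suc k" x] in simp)
      moreover have "(B / fact (Suc k)) * (real (Suc k) * x ^ k) = B * x ^ k / fact k"
        by (simp add: fact_Suc field_simps del: of_nat_Suc)
      ultimately show "(\<phi> has_vector_derivative B * x ^ k / fact k) (at x)"
        by (simp add: has_real_derivative_iff_has_vector_derivative)
      show "norm (\<delta>' x) \<le> B * x ^ k / fact k" using B[of x] x by simp
    qed
    then show ?thesis using 2 d0 by (simp add: \<phi>_def)
  next
    case 3
    define \<phi> where "\<phi> s = - (B / fact (Suc k)) * (-s) ^ Suc k" for s
    have "norm (\<delta> 0 - \<delta> t) \<le> \<phi> 0 - \<phi> t"
    proof (rule differentiable_bound_general[OF 3 cont, of \<phi> \<delta>' "\<lambda>s. B * (-s) ^ k / fact k"])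
      show "continuous_on {t..0} \<phi>" unfolding \<phi>_def by (intro continuous_intros) auto
      fix x assume x: "t < x" "x < 0"
      show "(\<delta> has_vector_derivative \<delta>' x) (at x)" by (rule d)
      have "((\<lambda>s. (-s) ^ Suc k) has_real_derivative (real (Suc k) * (-x) ^ k * (-1))) (at x)"
        by (rule DERIV_chain'[where g="\<lambda>s. s ^ Suc k"]) (auto intro!: derivative_eq_intros simp: DERIV_pow[of "Suc k" "-x", simplified])
      then have "(\<phi> has_real_derivative - (B / fact (Suc k)) * (real (Suc k) * (-x) ^ k * (-1))) (at x)"
        unfolding \<phi>_def by (rule DERIV_cmult)
      moreover have "- (B / fact (Suc k)) * (real (Suc k) * (-x) ^ k * (-1)) = B * (-x) ^ k / fact k"
        by (simp add: fact_Suc field_simps del: of_nat_Suc)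
      ultimately show "(\<phi> has_vector_derivative B * (-x) ^ k / fact k) (at x)"
        by (simp add: has_real_derivative_iff_has_vector_derivative)
      show "norm (\<delta>' x) \<le> B * (-x) ^ k / fact k" using B[of x] x by simp
    qed
    then show ?thesis using 3 d0 by (simp add: \<phi>_def)
  qed
qed

lemma gronwall_fwd:
  fixes \<delta> :: "real \<Rightarrow> 'a::real_normed_vector"
  assumes L: "L > 0" and b: "b \<ge> 0"
    and d: "\<And>s. (\<delta> has_vector_derivative \<delta>' s) (at s)"
    and bnd: "\<And>s. 0 \<le> s \<Longrightarrow> s \<le> T \<Longrightarrow> norm (\<delta>' s) \<le> L * norm (\<delta> s) + b"
    and t: "0 \<le> t" "t \<le> T"
  shows "norm (\<delta> t) \<le> (norm (\<delta> 0) + b / L) * exp (L * t)"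
proof (rule field_le_epsilon)
  fix e :: real assume e: "0 < e"
  define \<epsilon> where "\<epsilon> = e / exp (L * T)"
  have \<epsilon>: "\<epsilon> > 0" using e by (simp add: \<epsilon>_def)
  define \<psi> where "\<psi> s = (norm (\<delta> 0) + \<epsilon> + b / L) * exp (L * s) - b / L" for s
  have \<psi>d: "(\<psi> has_vector_derivative L * \<psi> s + b) (at s)" for s
  proof -
    have "(\<psi> has_real_derivative (norm (\<delta> 0) + \<epsilon> + b / L) * (exp (L * s) * L)) (at s)"
      unfolding \<psi>_def by (auto intro!: derivative_eq_intros)
    moreover have "(norm (\<delta> 0) + \<epsilon> + b / L) * (exp (L * s) * L) = L * \<psi> s + b"
      using L by (simp add: \<psi>_def field_simps)
    ultimately show ?thesis by (simp add: has_real_derivative_iff_has_vector_derivative)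
  qed
  have cd: "continuous_on S \<delta>" for S
    using deriv_cont_on[OF d] continuous_on_subset by blast
  have c\<psi>: "continuous_on S \<psi>" for S unfolding \<psi>_def by (intro continuous_intros)
  have claim: "norm (\<delta> s) < \<psi> s" if s: "0 \<le> s" "s \<le> T" for s
  proof (rule ccontr)
    assume "\<not> norm (\<delta> s) < \<psi> s"
    define S where "S = {0..T} \<inter> {s. \<psi> s \<le> norm (\<delta> s)}"
    have Sne: "S \<noteq> {}" using s \<open>\<not> norm (\<delta> s) < \<psi> s\<close> by (auto simp: S_def)
    have Scl: "closed S" unfolding S_def
      by (intro closed_Int closed_atLeastAtMost closed_Collect_le c\<psi> continuous_on_norm cd)
    have Sbd: "bdd_below S" by (rule bdd_belowI[of _ 0]) (auto simp: S_def)
    define t1 where "t1 = Inf S"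
    have t1S: "t1 \<in> S" unfolding t1_def by (rule closed_contains_Inf[OF Sne Sbd Scl])
    have notS: "x \<notin> S" if "x < t1" for x
      using that cInf_lower[OF _ Sbd] unfolding t1_def by fastforce
    have t1: "0 \<le> t1" "t1 \<le> T" "\<psi> t1 \<le> norm (\<delta> t1)" using t1S by (auto simp: S_def)
    have psi0: "\<psi> 0 = norm (\<delta> 0) + \<epsilon>" by (simp add: \<psi>_def)
    show False
    proof (cases "t1 = 0")
      case True then show False using t1 psi0 \<epsilon> by simp
    next
      case False
      then have t1p: "0 < t1" using t1 by simp
      have "norm (\<delta> t1 - \<delta> 0) \<le> \<psi> t1 - \<psi> 0"
      proof (rule differentiable_bound_general[OF t1p cd c\<psi>])
        fix x assume x: "0 < x" "x < t1"
        show "(\<delta> has_vector_derivative \<delta>' x) (at x)" by (rule d)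
        show "(\<psi> has_vector_derivative L * \<psi> x + b) (at x)" by (rule \<psi>d)
        have "x \<notin> S" using notS x by simp
        then have "norm (\<delta> x) < \<psi> x" using x t1 by (auto simp: S_def)
        moreover have "norm (\<delta>' x) \<le> L * norm (\<delta> x) + b" using bnd[of x] x t1 by simp
        ultimately show "norm (\<delta>' x) \<le> L * \<psi> x + b" using L
          by (smt (verit) mult_left_mono)
      qed
      moreover have "norm (\<delta> t1) \<le> norm (\<delta> t1 - \<delta> 0) + norm (\<delta> 0)"
        using norm_triangle_ineq[of "\<delta> t1 - \<delta> 0" "\<delta> 0"] by simp
      ultimately show False using t1 psi0 \<epsilon> by linarith
    qed
  qed
  have "norm (\<delta> t) < \<psi> t" by (rule claim[OF t])
  also have "\<psi> t \<le> (norm (\<delta> 0) + b / L) * exp (L * t) + \<epsilon> * exp (L * T)"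
  proof -
    have "\<epsilon> * exp (L * t) \<le> \<epsilon> * exp (L * T)" using \<epsilon> L t by (simp add: mult_left_mono)
    moreover have "b / L \<ge> 0" using b L by simp
    ultimately show ?thesis by (simp add: \<psi>_def algebra_simps)
  qed
  also have "\<epsilon> * exp (L * T) = e" by (simp add: \<epsilon>_def)
  finally show "norm (\<delta> t) \<le> (norm (\<delta> 0) + b / L) * exp (L * t) + e" by simp
qed

lemma gronwall:
  fixes \<delta> :: "real \<Rightarrow> 'a::real_normed_vector"
  assumes L: "L > 0" and b: "b \<ge> 0"
    and d: "\<And>s. (\<delta> has_vector_derivative \<delta>' s) (at s)"
    and bnd: "\<And>s. \<bar>s\<bar> \<le> T \<Longrightarrow> norm (\<delta>' s) \<le> L * norm (\<delta> s) + b"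
    and t: "\<bar>t\<bar> \<le> T"
  shows "norm (\<delta> t) \<le> (norm (\<delta> 0) + b / L) * exp (L * T)"
proof -
  have "norm (\<delta> t) \<le> (norm (\<delta> 0) + b / L) * exp (L * \<bar>t\<bar>)"
  proof (cases "0 \<le> t")
    case True
    show ?thesis using gronwall_fwd[OF L b d, of T t] bnd True t by simp
  next
    case False
    have d2: "((\<lambda>s. \<delta> (- s)) has_vector_derivative - \<delta>' (- s)) (at s)" for s
      using vector_diff_chain_at[OF has_vector_derivative_minus[OF has_vector_derivative_id] d[of "-s"]]
      by (simp add: o_def)
    have "norm (\<delta> (- (- t))) \<le> (norm (\<delta> (- 0)) + b / L) * exp (L * (- t))"
      by (rule gronwall_fwd[OF L b d2, of T "- t"]) (use bnd False t in auto)
    then show ?thesis using False by simp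
  qed
  also have "\<dots> \<le> (norm (\<delta> 0) + b / L) * exp (L * T)"
    using L b t by (intro mult_left_mono) auto
  finally show ?thesis .
qed



fun picard :: "('a::banach \<Rightarrow> 'a) \<Rightarrow> 'a \<Rightarrow> nat \<Rightarrow> real \<Rightarrow> 'a" where
  "picard F x0 0 = (\<lambda>t. x0)"
| "picard F x0 (Suc k) = (\<lambda>t. x0 + sint (\<lambda>s. F (picard F x0 k s)) t)"

lemma ode_unique:
  fixes F :: "'a::banach \<Rightarrow> 'a"
  assumes lip: "\<And>x y. norm (F x - F y) \<le> L * norm (x - y)" and L: "L > 0"
    and d1: "\<And>t. (\<gamma>1 has_vector_derivative F (\<gamma>1 t)) (at t)"
    and d2: "\<And>t. (\<gamma>2 has_vector_derivative F (\<gamma>2 t)) (at t)"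
    and i: "\<gamma>1 0 = \<gamma>2 0"
  shows "\<gamma>1 t = \<gamma>2 t"
proof -
  have "norm ((\<lambda>s. \<gamma>1 s - \<gamma>2 s) t) \<le> (norm ((\<lambda>s. \<gamma>1 s - \<gamma>2 s) 0) + 0 / L) * exp (L * \<bar>t\<bar>)"
  proof (rule gronwall[OF L order_refl])
    show "((\<lambda>s. \<gamma>1 s - \<gamma>2 s) has_vector_derivative F (\<gamma>1 s) - F (\<gamma>2 s)) (at s)" for s
      by (intro has_vector_derivative_diff d1 d2)
    show "norm (F (\<gamma>1 s) - F (\<gamma>2 s)) \<le> L * norm (\<gamma>1 s - \<gamma>2 s) + 0" for s using lip by simp
  qed simp
  then show ?thesis using i by simp
qed

lemma ode_exists:
  fixes F :: "'a::banach \<Rightarrow> 'a"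
  assumes lip: "\<And>x y. norm (F x - F y) \<le> L * norm (x - y)" and L: "L > 0"
  shows "\<exists>\<gamma>. \<gamma> 0 = x0 \<and> (\<forall>t. (\<gamma> has_vector_derivative F (\<gamma> t)) (at t))"
proof -
  let ?X = "picard F x0"
  have cF: "continuous_on UNIV F" by (rule lip_cont[OF lip])
  have cX: "continuous_on UNIV (?X k)" for k
  proof (induction k)
    case 0 show ?case by (simp add: continuous_on_const)
  next
    case (Suc k)
    have "continuous_on UNIV (\<lambda>s. F (?X k s))"
      using continuous_on_compose2[OF cF Suc] by auto
    then have "(sint (\<lambda>s. F (?X k s)) has_vector_derivative F (?X k t)) (at t)" for t
      by (rule sint_deriv)
    then have "(?X (Suc k) has_vector_derivative F (?X k t)) (at t)" for t
      using has_vector_derivative_add[OF has_vector_derivative_const] by fastforce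
    then show ?case by (rule deriv_cont_on)
  qed
  have dX: "(?X (Suc k) has_vector_derivative F (?X k t)) (at t)" for k t
  proof -
    have "continuous_on UNIV (\<lambda>s. F (?X k s))"
      using continuous_on_compose2[OF cF cX] by auto
    then have "(sint (\<lambda>s. F (?X k s)) has_vector_derivative F (?X k t)) (at t)"
      by (rule sint_deriv)
    then show ?thesis
      using has_vector_derivative_add[OF has_vector_derivative_const] by fastforce
  qed
  have X0: "?X k 0 = x0" for k by (cases k) auto
  define C where "C = norm (F x0)"
  have est: "norm (?X (Suc k) t - ?X k t) \<le> C * L ^ k * \<bar>t\<bar> ^ Suc k / fact (Suc k)" for k t
  proof (induction k arbitrary: t)
    case 0
    have "norm ((\<lambda>s. ?X (Suc 0) s - ?X 0 s) t) \<le> C * \<bar>t\<bar> ^ Suc 0 / fact (Suc 0)"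
    proof (rule poly_bound)
      show "((\<lambda>s. ?X (Suc 0) s - ?X 0 s) has_vector_derivative F x0 - 0) (at s)" for s
        using has_vector_derivative_diff[OF dX[of 0 s] has_vector_derivative_const[of x0]] by simp
      show "norm (F x0 - 0) \<le> C * \<bar>s\<bar> ^ 0 / fact 0" for s by (simp add: C_def)
    qed (simp add: X0)
    then show ?case by simp
  next
    case (Suc k)
    have "norm ((\<lambda>s. ?X (Suc (Suc k)) s - ?X (Suc k) s) t) \<le> (C * L ^ Suc k) * \<bar>t\<bar> ^ Suc (Suc k) / fact (Suc (Suc k))"
    proof (rule poly_bound)
      show "((\<lambda>s. ?X (Suc (Suc k)) s - ?X (Suc k) s) has_vector_derivative F (?X (Suc k) s) - F (?X k s)) (at s)" for s
        by (intro has_vector_derivative_diff dX)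
      show "norm (F (?X (Suc k) s) - F (?X k s)) \<le> (C * L ^ Suc k) * \<bar>s\<bar> ^ Suc k / fact (Suc k)" for s
      proof -
        have "norm (F (?X (Suc k) s) - F (?X k s)) \<le> L * norm (?X (Suc k) s - ?X k s)" by (rule lip)
        also have "\<dots> \<le> L * (C * L ^ k * \<bar>s\<bar> ^ Suc k / fact (Suc k))"
          using Suc[of s] L by (intro mult_left_mono) auto
        finally show ?thesis by (simp add: algebra_simps)
      qed
    qed (simp add: X0)
    then show ?case by simp
  qed
  define d where "d i t = ?X (Suc i) t - ?X i t" for i t
  define \<gamma> where "\<gamma> t = x0 + (\<Sum>i. d i t)" for t
  have tele: "(\<Sum>i<n. d i t) = ?X n t - x0" for n t
    unfolding d_def using sum_lessThan_telescope[of "\<lambda>i. ?X i t" n] X0 by simp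
  have UL: "uniform_limit {-T..T} ?X \<gamma> sequentially" if T: "T \<ge> 0" for T
  proof -
    define M where "M i = C * L ^ i * T ^ Suc i / fact (Suc i)" for i
    have Mb: "\<forall>t\<in>{-T..T}. norm (d i t) \<le> M i" for i
    proof
      fix t :: real assume "t \<in> {-T..T}"
      then have "\<bar>t\<bar> \<le> T" by auto
      then have "\<bar>t\<bar> ^ Suc i \<le> T ^ Suc i" by (intro power_mono) auto
      then have "C * L ^ i * \<bar>t\<bar> ^ Suc i / fact (Suc i) \<le> M i"
        unfolding M_def using L by (intro divide_right_mono mult_left_mono) (auto simp: C_def)
      then show "norm (d i t) \<le> M i" using est[of i t] by (simp add: d_def)
    qed
    have "summable (\<lambda>n. (L * T) ^ n /\<^sub>R fact n)" by (rule summable_exp_generic)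
    then have "summable (\<lambda>i. (L * T) ^ Suc i /\<^sub>R fact (Suc i))"
      by (subst summable_Suc_iff)
    then have "summable (\<lambda>i. (C / L) * ((L * T) ^ Suc i /\<^sub>R fact (Suc i)))"
      by (rule summable_mult)
    moreover have "(C / L) * ((L * T) ^ Suc i /\<^sub>R fact (Suc i)) = M i" for i
      using L by (simp add: M_def power_mult_distrib field_simps)
    ultimately have sM: "summable M" by simp
    have "uniform_limit {-T..T} (\<lambda>n t. \<Sum>i<n. d i t) (\<lambda>t. \<Sum>i. d i t) sequentially"
      by (rule Weierstrass_m_test_ev[OF always_eventually sM]) (use Mb in blast)
    then show ?thesis
      unfolding uniform_limit_iff tele \<gamma>_def
      by (simp add: dist_norm algebra_simps)
  qed
  have c\<gamma>: "continuous_on UNIV \<gamma>"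
  proof (rule continuous_at_imp_continuous_on, rule ballI)
    fix t :: real
    have "continuous_on {-(\<bar>t\<bar>+1)..\<bar>t\<bar>+1} \<gamma>"
      by (rule uniform_limit_theorem[OF always_eventually UL]) (auto intro: cX continuous_on_subset)
    moreover have "t \<in> interior {-(\<bar>t\<bar>+1)..\<bar>t\<bar>+1}" by auto
    ultimately show "isCont \<gamma> t" by (rule continuous_on_interior)
  qed
  have cF\<gamma>: "continuous_on UNIV (\<lambda>s. F (\<gamma> s))"
    using continuous_on_compose2[OF cF c\<gamma>] by auto
  have eq: "\<gamma> t = x0 + sint (\<lambda>s. F (\<gamma> s)) t" for t
  proof -
    have ul: "uniform_limit {-\<bar>t\<bar>..\<bar>t\<bar>} ?X \<gamma> sequentially" by (rule UL) simp
    have "(\<lambda>n. ?X n t) \<longlonglongrightarrow> \<gamma> t"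
      by (rule tendsto_uniform_limitI[OF ul]) (auto simp: abs_le_iff)
    then have l1: "(\<lambda>n. ?X (Suc n) t) \<longlonglongrightarrow> \<gamma> t" by (rule LIMSEQ_Suc)
    have l2: "(\<lambda>n. ?X (Suc n) t) \<longlonglongrightarrow> x0 + sint (\<lambda>s. F (\<gamma> s)) t"
    proof (rule LIMSEQ_I)
      fix r :: real assume r: "0 < r"
      define e where "e = r / (L * \<bar>t\<bar> + 1)"
      have Lt: "L * \<bar>t\<bar> + 1 > 0" using L by (smt (verit) mult_nonneg_nonneg abs_ge_zero)
      have e: "e > 0" using r Lt by (simp add: e_def)
      from ul[unfolded uniform_limit_iff, rule_format, OF e]
      obtain N where N: "\<And>n s. n \<ge> N \<Longrightarrow> s \<in> {-\<bar>t\<bar>..\<bar>t\<bar>} \<Longrightarrow> dist (?X n s) (\<gamma> s) < e"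
        unfolding eventually_sequentially by blast
      show "\<exists>no. \<forall>n\<ge>no. norm (?X (Suc n) t - (x0 + sint (\<lambda>s. F (\<gamma> s)) t)) < r"
      proof (intro exI allI impI)
        fix n assume n: "N \<le> n"
        have cFX: "continuous_on UNIV (\<lambda>s. F (?X n s))"
          using continuous_on_compose2[OF cF cX] by auto
        have "norm ((\<lambda>s. sint (\<lambda>s. F (?X n s)) s - sint (\<lambda>s. F (\<gamma> s)) s) t) \<le> (L * e) * \<bar>t\<bar> ^ Suc 0 / fact (Suc 0)"
        proof (rule poly_bound)
          show "((\<lambda>s. sint (\<lambda>s. F (?X n s)) s - sint (\<lambda>s. F (\<gamma> s)) s) has_vector_derivative F (?X n s) - F (\<gamma> s)) (at s)" for s
            by (intro has_vector_derivative_diff sint_deriv cFX cF\<gamma>)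
          show "norm (F (?X n s) - F (\<gamma> s)) \<le> L * e * \<bar>s\<bar> ^ 0 / fact 0" if "\<bar>s\<bar> \<le> \<bar>t\<bar>" for s
          proof -
            have "norm (F (?X n s) - F (\<gamma> s)) \<le> L * norm (?X n s - \<gamma> s)" by (rule lip)
            also have "\<dots> \<le> L * e" using N[OF n, of s] that L by (intro mult_left_mono) (auto simp: dist_norm abs_le_iff)
            finally show ?thesis by simp
          qed
        qed simp
        then have "norm (sint (\<lambda>s. F (?X n s)) t - sint (\<lambda>s. F (\<gamma> s)) t) \<le> L * e * \<bar>t\<bar>" by simp
        also have "\<dots> < r"
        proof -
          have "L * e * \<bar>t\<bar> < e * (L * \<bar>t\<bar> + 1)" using e by (simp add: algebra_simps)
          also have "\<dots> = r" using Lt by (simp add: e_def)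
          finally show ?thesis .
        qed
        finally show "norm (?X (Suc n) t - (x0 + sint (\<lambda>s. F (\<gamma> s)) t)) < r" by simp
      qed
    qed
    show ?thesis using LIMSEQ_unique[OF l1 l2] .
  qed
  have "\<gamma> = (\<lambda>t. x0 + sint (\<lambda>s. F (\<gamma> s)) t)" using eq by (rule ext)
  then have d\<gamma>: "(\<gamma> has_vector_derivative F (\<gamma> t)) (at t)" for t
    using has_vector_derivative_add[OF has_vector_derivative_const sint_deriv[OF cF\<gamma>, of t]]
    by (metis add_0)
  show ?thesis
    by (rule exI[of _ \<gamma>]) (use eq[of 0] d\<gamma> in simp)
qed



lemma sympJ_norm: "norm (sympJ (x :: 'a::real_normed_vector \<times> 'a)) = norm x"
  by (simp add: sympJ_def norm_prod_def add.commute)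

lemma sympJ_diff: "sympJ x - sympJ y = sympJ (x - y)"
  by (simp add: sympJ_def)

lemma sympJ_add: "sympJ (x + y) = sympJ x + sympJ y"
  by (simp add: sympJ_def)

lemma sympJ_scaleR: "sympJ (c *\<^sub>R x) = c *\<^sub>R sympJ x"
  by (simp add: sympJ_def)

lemma sympJ_zero[simp]: "sympJ 0 = 0"
  by (simp add: sympJ_def zero_prod_def)

lemma sympJ_self: "(x :: 'a::real_inner \<times> 'a) \<bullet> sympJ x = 0"
  by (simp add: sympJ_def inner_prod_def inner_commute)

lemma sympJ2_norm: "norm (sympJ2 x) = norm x"
  using sympJ_norm[of "fst x"] sympJ_norm[of "snd x"] by (simp add: sympJ2_def norm_prod_def)

lemma sympJ2_diff: "sympJ2 x - sympJ2 y = sympJ2 (x - y)"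
  by (simp add: sympJ2_def sympJ_diff)

lemma sympJ2_add: "sympJ2 (x + y) = sympJ2 x + sympJ2 y"
  by (simp add: sympJ2_def sympJ_add)

lemma sympJ2_scaleR: "sympJ2 (c *\<^sub>R x) = c *\<^sub>R sympJ2 x"
  by (simp add: sympJ2_def sympJ_scaleR)

lemma sympJ2_self: "x \<bullet> sympJ2 x = 0"
  by (simp add: sympJ2_def inner_prod_def sympJ_self[unfolded inner_prod_def])

lemma norm_fst_le': "norm (fst x) \<le> norm x"
  using norm_fst_le[of "fst x" "snd x"] by simp

lemma grad_unique:
  fixes g g' :: "'a::real_inner"
  assumes "(f has_derivative (\<lambda>h. g \<bullet> h)) (at x)" "(f has_derivative (\<lambda>h. g' \<bullet> h)) (at x)"
  shows "g = g'"
proof -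
  have "(\<lambda>h. g \<bullet> h) = (\<lambda>h. g' \<bullet> h)" by (rule has_derivative_unique[OF assms])
  then have "g \<bullet> (g - g') = g' \<bullet> (g - g')" by metis
  then have "(g - g') \<bullet> (g - g') = 0" by (simp add: inner_diff_left)
  then show ?thesis by simp
qed

lemma chain_inner:
  assumes "(\<gamma> has_vector_derivative v) (at t)" "(H has_derivative (\<lambda>h. g \<bullet> h)) (at (\<gamma> t))"
  shows "((\<lambda>t. H (\<gamma> t)) has_real_derivative (g \<bullet> v)) (at t)"
proof -
  have "((\<lambda>t. H (\<gamma> t)) has_derivative (\<lambda>h. g \<bullet> (h *\<^sub>R v))) (at t)"
    using has_derivative_compose[OF assms(1)[unfolded has_vector_derivative_def] assms(2)] .
  moreover have "(\<lambda>h. g \<bullet> (h *\<^sub>R v)) = (*) (g \<bullet> v)" by (auto simp: fun_eq_iff)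
  ultimately show ?thesis by (simp add: has_field_derivative_def)
qed

lemma powr_le_root:
  fixes x A p :: real
  assumes "0 \<le> x" "0 < p" "x powr p \<le> A"
  shows "x \<le> A powr (1 / p)"
proof -
  have "x = (x powr p) powr (1 / p)" using assms by (simp add: powr_powr)
  also have "\<dots> \<le> A powr (1 / p)" using assms by (intro powr_mono2) auto
  finally show ?thesis .
qed

lemma sup_tendsto0:
  fixes \<phi> :: "real \<Rightarrow> real \<Rightarrow> real"
  assumes T: "0 \<le> T"
    and ev: "eventually (\<lambda>\<kappa>. \<forall>t\<in>{-T..T}. 0 \<le> \<phi> \<kappa> t \<and> \<phi> \<kappa> t \<le> B \<kappa>) at_top"
    and B: "(B \<longlongrightarrow> 0) at_top"
  shows "((\<lambda>\<kappa>. SUP t\<in>{-T..T}. \<phi> \<kappa> t) \<longlongrightarrow> 0) at_top"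
proof (rule tendsto_sandwich[OF _ _ tendsto_const B])
  show "eventually (\<lambda>\<kappa>. 0 \<le> (SUP t\<in>{-T..T}. \<phi> \<kappa> t)) at_top"
    using ev
  proof eventually_elim
    case (elim \<kappa>)
    have "bdd_above (\<phi> \<kappa> ` {-T..T})" using elim by (intro bdd_aboveI2[of _ _ "B \<kappa>"]) auto
    moreover have "0 \<in> {-T..T}" using T by simp
    ultimately show ?case using elim by (intro cSUP_upper2[of _ _ 0]) auto
  qed
  show "eventually (\<lambda>\<kappa>. (SUP t\<in>{-T..T}. \<phi> \<kappa> t) \<le> B \<kappa>) at_top"
    using ev
  proof eventually_elim
    case (elim \<kappa>)
    show ?case using elim T by (intro cSUP_least) auto
  qed
qed


theorem lemma6p2:
  fixes H0 :: "(real^'n) \<times> (real^'n) \<Rightarrow> real"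
    and \<Lambda> :: "(real^'n) \<times> (real^'n) \<Rightarrow> (real^'m) \<times> (real^'m) \<Rightarrow> real"
    and c0 c1 p \<kappa>0 :: real
    and c2 :: "real \<Rightarrow> real"
    and z0 :: "real \<Rightarrow> (real^'n) \<times> (real^'n)"
    and \<zeta>0 :: "real \<Rightarrow> (real^'m) \<times> (real^'m)"
    and zinit :: "(real^'n) \<times> (real^'n)"
  assumes C11: "\<And>\<kappa>. \<kappa> > 0 \<Longrightarrow> C11 (\<lambda>w. H0 (fst w) + \<kappa> * \<Lambda> (fst w) (snd w))"
    and Lambda_nonneg: "\<And>z \<zeta>. \<Lambda> z \<zeta> \<ge> 0"
    and Lambda_zero: "\<And>z \<zeta>. \<Lambda> z \<zeta> = 0 \<longleftrightarrow> \<zeta> = 0"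
    and consts_pos: "c0 > 0" "c1 > 0" "p > 0"
    and coercive: "\<And>\<kappa> z \<zeta>. \<kappa> > 0 \<Longrightarrow>
        H0 z + \<kappa> * \<Lambda> z \<zeta> \<ge> c0 * (norm z powr p + \<kappa> * norm \<zeta> powr p) - c1"
    and c2_pos: "\<And>R. R > 0 \<Longrightarrow> c2 R > 0"
    and dLambda: "\<And>R z \<zeta> g. R > 0 \<Longrightarrow> norm z \<le> R \<Longrightarrow>
        ((\<lambda>z'. \<Lambda> z' \<zeta>) has_derivative (\<lambda>h. g \<bullet> h)) (at z) \<Longrightarrow>
        norm g \<le> c2 R * \<Lambda> z \<zeta>"
    and kappa0_pos: "\<kappa>0 > 0"
    and init_conv: "(z0 \<longlongrightarrow> zinit) at_top"
    and init_Lambda: "((\<lambda>\<kappa>. \<kappa> * \<Lambda> (z0 \<kappa>) (\<zeta>0 \<kappa>)) \<longlongrightarrow> 0) at_top"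
    and init_energy: "bdd_above ((\<lambda>\<kappa>. H0 (z0 \<kappa>) + \<kappa> * \<Lambda> (z0 \<kappa>) (\<zeta>0 \<kappa>)) ` {\<kappa>0..})"
  shows "\<exists>\<gamma> :: real \<Rightarrow> real \<Rightarrow> ((real^'n) \<times> (real^'n)) \<times> ((real^'m) \<times> (real^'m)).
     (\<forall>\<kappa>\<ge>\<kappa>0. ham_curve (\<lambda>w. H0 (fst w) + \<kappa> * \<Lambda> (fst w) (snd w)) sympJ2 (\<gamma> \<kappa>)
              \<and> \<gamma> \<kappa> 0 = (z0 \<kappa>, \<zeta>0 \<kappa>)) \<and>
     (\<exists>zc. ham_curve H0 sympJ zc \<and> zc 0 = zinit) \<and>
     (\<forall>zc. ham_curve H0 sympJ zc \<and> zc 0 = zinit \<longrightarrow>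
        (\<forall>T>0.
          ((\<lambda>\<kappa>. SUP t\<in>{-T..T}. norm (fst (\<gamma> \<kappa> t) - zc t) + norm (snd (\<gamma> \<kappa> t)))
              \<longlongrightarrow> 0) at_top \<and>
          ((\<lambda>\<kappa>. SUP t\<in>{-T..T}. \<bar>H0 (fst (\<gamma> \<kappa> t)) - H0 (z0 \<kappa>)\<bar>
                                 + \<kappa> * \<Lambda> (fst (\<gamma> \<kappa> t)) (snd (\<gamma> \<kappa> t)))
              \<longlongrightarrow> 0) at_top))"
proof -
  define H where "H \<kappa> w = H0 (fst w) + \<kappa> * \<Lambda> (fst w) (snd w)" for \<kappa> w
  obtain g1 L1 where d1: "\<And>w. ((\<lambda>w. H0 (fst w) + 1 * \<Lambda> (fst w) (snd w)) has_derivative (\<lambda>h. g1 w \<bullet> h)) (at w)"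
    and l1: "\<And>v w. norm (g1 v - g1 w) \<le> L1 * norm (v - w)"
    using C11[of 1, OF zero_less_one] unfolding C11_def by blast
  obtain g2 L2 where d2: "\<And>w. ((\<lambda>w. H0 (fst w) + 2 * \<Lambda> (fst w) (snd w)) has_derivative (\<lambda>h. g2 w \<bullet> h)) (at w)"
    and l2: "\<And>v w. norm (g2 v - g2 w) \<le> L2 * norm (v - w)"
    using C11[of 2, OF zero_less_numeral[where ?'a=real]] unfolding C11_def by blast
  define gL where "gL w = g2 w - g1 w" for w
  have dL: "((\<lambda>w. \<Lambda> (fst w) (snd w)) has_derivative (\<lambda>h. gL w \<bullet> h)) (at w)" for w
  proof -
    have "((\<lambda>w. (H0 (fst w) + 2 * \<Lambda> (fst w) (snd w)) - (H0 (fst w) + 1 * \<Lambda> (fst w) (snd w)))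
        has_derivative (\<lambda>h. g2 w \<bullet> h - g1 w \<bullet> h)) (at w)"
      by (rule has_derivative_diff[OF d2 d1])
    moreover have "(\<lambda>w. (H0 (fst w) + 2 * \<Lambda> (fst w) (snd w)) - (H0 (fst w) + 1 * \<Lambda> (fst w) (snd w)))
        = (\<lambda>w. \<Lambda> (fst w) (snd w))" by (rule ext) simp
    moreover have "(\<lambda>h. g2 w \<bullet> h - g1 w \<bullet> h) = (\<lambda>h. gL w \<bullet> h)"
      by (simp add: gL_def inner_diff_left)
    ultimately show ?thesis by simp
  qed
  define G0r where "G0r w = 2 *\<^sub>R g1 w - g2 w" for w
  have dH0f: "((\<lambda>w. H0 (fst w)) has_derivative (\<lambda>h. G0r w \<bullet> h)) (at w)" for w
  proof -
    have "((\<lambda>w. 2 * (H0 (fst w) + 1 * \<Lambda> (fst w) (snd w)) - (H0 (fst w) + 2 * \<Lambda> (fst w) (snd w)))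
        has_derivative (\<lambda>h. 2 * (g1 w \<bullet> h) - g2 w \<bullet> h)) (at w)"
      by (rule has_derivative_diff[OF has_derivative_mult_right[OF d1] d2])
    moreover have "(\<lambda>w. 2 * (H0 (fst w) + 1 * \<Lambda> (fst w) (snd w)) - (H0 (fst w) + 2 * \<Lambda> (fst w) (snd w)))
        = (\<lambda>w. H0 (fst w))" by (rule ext) simp
    moreover have "(\<lambda>h. 2 * (g1 w \<bullet> h) - g2 w \<bullet> h) = (\<lambda>h. G0r w \<bullet> h)"
      by (simp add: G0r_def inner_diff_left)
    ultimately show ?thesis by simp
  qed
  define grad0 where "grad0 z = fst (G0r (z, 0 :: (real^'m) \<times> (real^'m)))" for z
  have dH0: "(H0 has_derivative (\<lambda>h. grad0 z \<bullet> h)) (at z)" for z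
  proof -
    have "((\<lambda>z. (z, 0 :: (real^'m) \<times> (real^'m))) has_derivative (\<lambda>h. (h, 0))) (at z)"
      by (rule has_derivative_Pair[OF has_derivative_ident has_derivative_const, simplified])
    from has_derivative_compose[OF this dH0f]
    show ?thesis by (simp add: grad0_def inner_prod_def)
  qed
  define L0 where "L0 = 2 * \<bar>L1\<bar> + \<bar>L2\<bar> + 1"
  have L0: "L0 > 0" by (simp add: L0_def add_pos_nonneg)
  have l1': "norm (g1 v - g1 w) \<le> \<bar>L1\<bar> * norm (v - w)" for v w
    using l1[of v w] by (smt (verit) abs_ge_self mult_right_mono norm_ge_zero)
  have l2': "norm (g2 v - g2 w) \<le> \<bar>L2\<bar> * norm (v - w)" for v w
    using l2[of v w] by (smt (verit) abs_ge_self mult_right_mono norm_ge_zero)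
  have lG0r: "norm (G0r v - G0r w) \<le> L0 * norm (v - w)" for v w
  proof -
    have "G0r v - G0r w = 2 *\<^sub>R (g1 v - g1 w) - (g2 v - g2 w)"
      by (simp add: G0r_def algebra_simps)
    then have "norm (G0r v - G0r w) \<le> 2 * norm (g1 v - g1 w) + norm (g2 v - g2 w)"
      using norm_triangle_ineq4[of "2 *\<^sub>R (g1 v - g1 w)" "g2 v - g2 w"] by simp
    also have "\<dots> \<le> 2 * (\<bar>L1\<bar> * norm (v - w)) + \<bar>L2\<bar> * norm (v - w)"
      using l1'[of v w] l2'[of v w] by linarith
    also have "\<dots> \<le> L0 * norm (v - w)" by (simp add: L0_def algebra_simps)
    finally show ?thesis .
  qed
  have lgrad0: "norm (grad0 z - grad0 z') \<le> L0 * norm (z - z')" for z z'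
  proof -
    have "norm (grad0 z - grad0 z') = norm (fst (G0r (z, 0) - G0r (z', 0)))"
      by (simp add: grad0_def)
    also have "\<dots> \<le> norm (G0r (z, 0) - G0r (z', 0))" by (rule norm_fst_le')
    also have "\<dots> \<le> L0 * norm ((z, 0 :: (real^'m) \<times> (real^'m)) - (z', 0))" by (rule lG0r)
    also have "norm ((z, 0 :: (real^'m) \<times> (real^'m)) - (z', 0)) = norm (z - z')"
      by (simp add: norm_Pair)
    finally show ?thesis .
  qed
  define LL where "LL = \<bar>L1\<bar> + \<bar>L2\<bar>"
  have lgL: "norm (gL v - gL w) \<le> LL * norm (v - w)" for v w
  proof -
    have "gL v - gL w = (g2 v - g2 w) - (g1 v - g1 w)" by (simp add: gL_def algebra_simps)
    then have "norm (gL v - gL w) \<le> norm (g2 v - g2 w) + norm (g1 v - g1 w)"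
      using norm_triangle_ineq4 by metis
    then show ?thesis using l1'[of v w] l2'[of v w] by (simp add: LL_def algebra_simps)
  qed
  define Gk where "Gk \<kappa> w = (grad0 (fst w), 0 :: (real^'m) \<times> (real^'m)) + \<kappa> *\<^sub>R gL w" for \<kappa> w
  have dH: "((\<lambda>w. H0 (fst w) + \<kappa> * \<Lambda> (fst w) (snd w)) has_derivative (\<lambda>h. Gk \<kappa> w \<bullet> h)) (at w)" for \<kappa> w
  proof -
    have a: "((\<lambda>w. H0 (fst w)) has_derivative (\<lambda>h. grad0 (fst w) \<bullet> fst h)) (at w)"
      by (rule has_derivative_compose[OF has_derivative_fst[OF has_derivative_ident] dH0])
    have "((\<lambda>w. H0 (fst w) + \<kappa> * \<Lambda> (fst w) (snd w)) has_derivative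
        (\<lambda>h. grad0 (fst w) \<bullet> fst h + \<kappa> * (gL w \<bullet> h))) (at w)"
      by (rule has_derivative_add[OF a has_derivative_mult_right[OF dL]])
    moreover have "(\<lambda>h. grad0 (fst w) \<bullet> fst h + \<kappa> * (gL w \<bullet> h)) = (\<lambda>h. Gk \<kappa> w \<bullet> h)"
      by (rule ext) (simp add: Gk_def inner_add_left inner_prod_def distrib_left)
    ultimately show ?thesis by simp
  qed
  define F where "F \<kappa> w = sympJ2 (Gk \<kappa> w)" for \<kappa> w
  have lF: "norm (F \<kappa> v - F \<kappa> w) \<le> (L0 + \<bar>\<kappa>\<bar> * LL) * norm (v - w)" for \<kappa> v w
  proof -
    have "norm (F \<kappa> v - F \<kappa> w) = norm (Gk \<kappa> v - Gk \<kappa> w)"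
      by (simp add: F_def sympJ2_diff sympJ2_norm)
    also have "Gk \<kappa> v - Gk \<kappa> w = (grad0 (fst v) - grad0 (fst w), 0) + \<kappa> *\<^sub>R (gL v - gL w)"
      by (simp add: Gk_def algebra_simps)
    also have "norm \<dots> \<le> norm (grad0 (fst v) - grad0 (fst w)) + \<bar>\<kappa>\<bar> * norm (gL v - gL w)"
      using norm_triangle_ineq[of "(grad0 (fst v) - grad0 (fst w), 0 :: (real^'m) \<times> (real^'m))" "\<kappa> *\<^sub>R (gL v - gL w)"]
      by (simp add: norm_Pair)
    also have "\<dots> \<le> L0 * norm (v - w) + \<bar>\<kappa>\<bar> * (LL * norm (v - w))"
    proof (intro add_mono mult_left_mono lgL)
      have "norm (grad0 (fst v) - grad0 (fst w)) \<le> L0 * norm (fst v - fst w)" by (rule lgrad0)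
      also have "\<dots> \<le> L0 * norm (v - w)"
        using L0 norm_fst_le'[of "v - w"] by (intro mult_left_mono) auto
      finally show "norm (grad0 (fst v) - grad0 (fst w)) \<le> L0 * norm (v - w)" .
    qed simp
    finally show ?thesis by (simp add: algebra_simps)
  qed
  have LLnn: "LL \<ge> 0" by (simp add: LL_def)
  have "\<forall>\<kappa>. \<exists>g. g 0 = (z0 \<kappa>, \<zeta>0 \<kappa>) \<and> (\<forall>t. (g has_vector_derivative F \<kappa> (g t)) (at t))"
  proof
    fix \<kappa> :: real
    have "L0 + \<bar>\<kappa>\<bar> * LL > 0" using L0 LLnn by (simp add: add_pos_nonneg)
    then show "\<exists>g. g 0 = (z0 \<kappa>, \<zeta>0 \<kappa>) \<and> (\<forall>t. (g has_vector_derivative F \<kappa> (g t)) (at t))"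
      by (rule ode_exists[OF lF])
  qed
  then obtain \<gamma> where \<gamma>0: "\<And>\<kappa>. \<gamma> \<kappa> 0 = (z0 \<kappa>, \<zeta>0 \<kappa>)"
    and d\<gamma>: "\<And>\<kappa> t. (\<gamma> \<kappa> has_vector_derivative F \<kappa> (\<gamma> \<kappa> t)) (at t)"
    by (metis choice)
  have ham: "ham_curve (\<lambda>w. H0 (fst w) + \<kappa> * \<Lambda> (fst w) (snd w)) sympJ2 (\<gamma> \<kappa>)" for \<kappa>
    unfolding ham_curve_def using dH d\<gamma> unfolding F_def by blast
  define F0 where "F0 z = sympJ (grad0 z)" for z
  have lF0: "norm (F0 z - F0 z') \<le> L0 * norm (z - z')" for z z'
    using lgrad0[of z z'] by (simp add: F0_def sympJ_diff sympJ_norm)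
  obtain zc0 where zc00: "zc0 0 = zinit" and dzc0: "\<And>t. (zc0 has_vector_derivative F0 (zc0 t)) (at t)"
    using ode_exists[OF lF0 L0] by blast
  have hamzc0: "ham_curve H0 sympJ zc0"
    unfolding ham_curve_def using dH0 dzc0 unfolding F0_def by blast
  show ?thesis
  proof (rule exI[of _ \<gamma>], intro conjI)
    show "\<forall>\<kappa>\<ge>\<kappa>0. ham_curve (\<lambda>w. H0 (fst w) + \<kappa> * \<Lambda> (fst w) (snd w)) sympJ2 (\<gamma> \<kappa>) \<and> \<gamma> \<kappa> 0 = (z0 \<kappa>, \<zeta>0 \<kappa>)"
      using ham \<gamma>0 by blast
    show "\<exists>zc. ham_curve H0 sympJ zc \<and> zc 0 = zinit" using hamzc0 zc00 by blast
    show "\<forall>zc. ham_curve H0 sympJ zc \<and> zc 0 = zinit \<longrightarrow>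
        (\<forall>T>0.
          ((\<lambda>\<kappa>. SUP t\<in>{-T..T}. norm (fst (\<gamma> \<kappa> t) - zc t) + norm (snd (\<gamma> \<kappa> t)))
              \<longlongrightarrow> 0) at_top \<and>
          ((\<lambda>\<kappa>. SUP t\<in>{-T..T}. \<bar>H0 (fst (\<gamma> \<kappa> t)) - H0 (z0 \<kappa>)\<bar>
                                 + \<kappa> * \<Lambda> (fst (\<gamma> \<kappa> t)) (snd (\<gamma> \<kappa> t)))
              \<longlongrightarrow> 0) at_top)"
    proof (intro allI impI conjI)
    fix zc T assume zc: "ham_curve H0 sympJ zc \<and> zc 0 = zinit" and T: "(T::real) > 0"
    have dzc: "(zc has_vector_derivative sympJ (grad0 (zc t))) (at t)" for t
    proof -
      obtain g where g1: "(H0 has_derivative (\<lambda>h. g \<bullet> h)) (at (zc t))"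
        and g2: "(zc has_vector_derivative sympJ g) (at t)"
        using zc unfolding ham_curve_def by blast
      have "g = grad0 (zc t)" by (rule grad_unique[OF g1 dH0])
      then show ?thesis using g2 by simp
    qed
    have zc0: "zc 0 = zinit" using zc by simp
    obtain U0 where U0: "\<And>\<kappa>. \<kappa> \<ge> \<kappa>0 \<Longrightarrow> H0 (z0 \<kappa>) + \<kappa> * \<Lambda> (z0 \<kappa>) (\<zeta>0 \<kappa>) \<le> U0"
      using init_energy unfolding bdd_above_def by auto
    define U where "U = max U0 0"
    have U: "\<And>\<kappa>. \<kappa> \<ge> \<kappa>0 \<Longrightarrow> H0 (z0 \<kappa>) + \<kappa> * \<Lambda> (z0 \<kappa>) (\<zeta>0 \<kappa>) \<le> U" "U \<ge> 0"
      using U0 by (force simp: U_def)+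
    have energy: "H0 (fst (\<gamma> \<kappa> t)) + \<kappa> * \<Lambda> (fst (\<gamma> \<kappa> t)) (snd (\<gamma> \<kappa> t))
        = H0 (z0 \<kappa>) + \<kappa> * \<Lambda> (z0 \<kappa>) (\<zeta>0 \<kappa>)" for \<kappa> t
    proof -
      have "\<forall>s. ((\<lambda>s. H0 (fst (\<gamma> \<kappa> s)) + \<kappa> * \<Lambda> (fst (\<gamma> \<kappa> s)) (snd (\<gamma> \<kappa> s))) has_real_derivative 0) (at s)"
      proof
        fix s
        have "((\<lambda>s. H0 (fst (\<gamma> \<kappa> s)) + \<kappa> * \<Lambda> (fst (\<gamma> \<kappa> s)) (snd (\<gamma> \<kappa> s))) has_real_derivative
            Gk \<kappa> (\<gamma> \<kappa> s) \<bullet> F \<kappa> (\<gamma> \<kappa> s)) (at s)"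
          using chain_inner[OF d\<gamma>[of \<kappa> s] dH[of \<kappa> "\<gamma> \<kappa> s"]] by simp
        then show "((\<lambda>s. H0 (fst (\<gamma> \<kappa> s)) + \<kappa> * \<Lambda> (fst (\<gamma> \<kappa> s)) (snd (\<gamma> \<kappa> s))) has_real_derivative 0) (at s)"
          by (simp add: F_def sympJ2_self)
      qed
      from DERIV_isconst_all[OF this, of t 0] show ?thesis by (simp add: \<gamma>0)
    qed
    define Ac where "Ac = (U + c1) / c0"
    have Ac: "Ac > 0" using U consts_pos by (simp add: Ac_def add_nonneg_pos)
    have coer: "c0 * (norm (fst (\<gamma> \<kappa> t)) powr p + \<kappa> * norm (snd (\<gamma> \<kappa> t)) powr p) \<le> U + c1"
      if "\<kappa> \<ge> \<kappa>0" for \<kappa> t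
    proof -
      have "\<kappa> > 0" using that kappa0_pos by simp
      from coercive[OF this, of "fst (\<gamma> \<kappa> t)" "snd (\<gamma> \<kappa> t)"] energy[of \<kappa> t] U(1)[OF that]
      show ?thesis by linarith
    qed
    define R where "R = Ac powr (1 / p) + 1"
    have R: "R > 0" by (simp add: R_def add_nonneg_pos)
    have zbnd: "norm (fst (\<gamma> \<kappa> t)) \<le> R" if "\<kappa> \<ge> \<kappa>0" for \<kappa> t
    proof -
      have k: "\<kappa> > 0" using that kappa0_pos by simp
      have "0 \<le> \<kappa> * norm (snd (\<gamma> \<kappa> t)) powr p" using k by simp
      then have "c0 * norm (fst (\<gamma> \<kappa> t)) powr p \<le> U + c1"
        using coer[OF that, of t] consts_pos by (smt (verit) distrib_left mult_nonneg_nonneg)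
      then have "norm (fst (\<gamma> \<kappa> t)) powr p \<le> Ac"
        using consts_pos by (simp add: Ac_def field_simps)
      then have "norm (fst (\<gamma> \<kappa> t)) \<le> Ac powr (1 / p)"
        using consts_pos by (intro powr_le_root) auto
      then show ?thesis by (simp add: R_def)
    qed
    have \<zeta>bnd: "norm (snd (\<gamma> \<kappa> t)) \<le> (Ac / \<kappa>) powr (1 / p)" if "\<kappa> \<ge> \<kappa>0" for \<kappa> t
    proof -
      have k: "\<kappa> > 0" using that kappa0_pos by simp
      have "0 \<le> norm (fst (\<gamma> \<kappa> t)) powr p" by simp
      then have "c0 * (\<kappa> * norm (snd (\<gamma> \<kappa> t)) powr p) \<le> U + c1"
        using coer[OF that, of t] consts_pos by (smt (verit) distrib_left mult_nonneg_nonneg)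
      then have "norm (snd (\<gamma> \<kappa> t)) powr p \<le> Ac / \<kappa>"
        using consts_pos k by (simp add: Ac_def field_simps)
      then show ?thesis
        using consts_pos by (intro powr_le_root) auto
    qed
    define M where "M = norm (grad0 0) + L0 * R"
    have M: "M \<ge> 0" using L0 R by (simp add: M_def)
    have gbnd: "norm (grad0 z) \<le> M" if "norm z \<le> R" for z
    proof -
      have "norm (grad0 z) \<le> norm (grad0 0) + norm (grad0 z - grad0 0)"
        using norm_triangle_ineq[of "grad0 0" "grad0 z - grad0 0"] by simp
      also have "norm (grad0 z - grad0 0) \<le> L0 * norm z" using lgrad0[of z 0] by simp
      also have "L0 * norm z \<le> L0 * R" using L0 that by (intro mult_left_mono) auto
      finally show ?thesis by (simp add: M_def)
    qed
    define c2R where "c2R = c2 R"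
    have c2R: "c2R > 0" using c2_pos[OF R] by (simp add: c2R_def)
    have gLbnd: "norm (fst (gL (z, \<zeta>))) \<le> c2R * \<Lambda> z \<zeta>" if "norm z \<le> R" for z \<zeta>
    proof -
      have "((\<lambda>z'. (z', \<zeta>)) has_derivative (\<lambda>h. (h, 0))) (at z)"
        by (rule has_derivative_Pair[OF has_derivative_ident has_derivative_const, simplified])
      from has_derivative_compose[OF this dL]
      have "((\<lambda>z'. \<Lambda> z' \<zeta>) has_derivative (\<lambda>h. fst (gL (z, \<zeta>)) \<bullet> h)) (at z)"
        by (simp add: inner_prod_def)
      from dLambda[OF R that this] show ?thesis by (simp add: c2R_def)
    qed
    define K where "K = M * c2R + 1"
    have K: "K > 0" using M c2R by (simp add: K_def add_nonneg_pos)
    define f where "f \<kappa> t = \<kappa> * \<Lambda> (fst (\<gamma> \<kappa> t)) (snd (\<gamma> \<kappa> t))" for \<kappa> t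
    define f0 where "f0 \<kappa> = \<kappa> * \<Lambda> (z0 \<kappa>) (\<zeta>0 \<kappa>)" for \<kappa>
    have f_nn: "f \<kappa> t \<ge> 0" if "\<kappa> \<ge> \<kappa>0" for \<kappa> t
      using that kappa0_pos Lambda_nonneg by (simp add: f_def)
    have f0_nn: "f0 \<kappa> \<ge> 0" if "\<kappa> \<ge> \<kappa>0" for \<kappa>
      using that kappa0_pos Lambda_nonneg by (simp add: f0_def)
    have fd: "(f \<kappa> has_vector_derivative \<kappa> * (gL (\<gamma> \<kappa> t) \<bullet> F \<kappa> (\<gamma> \<kappa> t))) (at t)" for \<kappa> t
    proof -
      have "((\<lambda>s. \<Lambda> (fst (\<gamma> \<kappa> s)) (snd (\<gamma> \<kappa> s))) has_real_derivative gL (\<gamma> \<kappa> t) \<bullet> F \<kappa> (\<gamma> \<kappa> t)) (at t)"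
        using chain_inner[OF d\<gamma> dL] .
      then have "(f \<kappa> has_real_derivative \<kappa> * (gL (\<gamma> \<kappa> t) \<bullet> F \<kappa> (\<gamma> \<kappa> t))) (at t)"
        unfolding f_def by (rule DERIV_cmult)
      then show ?thesis by (simp add: has_real_derivative_iff_has_vector_derivative)
    qed
    have fdb: "norm (\<kappa> * (gL (\<gamma> \<kappa> t) \<bullet> F \<kappa> (\<gamma> \<kappa> t))) \<le> K * norm (f \<kappa> t) + 0"
      if "\<kappa> \<ge> \<kappa>0" for \<kappa> t
    proof -
      have k: "\<kappa> > 0" using that kappa0_pos by simp
      obtain z \<zeta> where w: "\<gamma> \<kappa> t = (z, \<zeta>)" by (metis surj_pair)
      have zR: "norm z \<le> R" using zbnd[OF that, of t] w by simp
      have "gL (z, \<zeta>) \<bullet> F \<kappa> (z, \<zeta>) = gL (z, \<zeta>) \<bullet> sympJ2 (grad0 z, 0) + \<kappa> * (gL (z, \<zeta>) \<bullet> sympJ2 (gL (z, \<zeta>)))"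
        by (simp add: F_def Gk_def sympJ2_add sympJ2_scaleR inner_add_right)
      also have "\<dots> = fst (gL (z, \<zeta>)) \<bullet> sympJ (grad0 z)"
        by (simp add: sympJ2_self sympJ_self sympJ2_def inner_prod_def[of "gL (z, \<zeta>)"] zero_prod_def[symmetric])
      finally have eq: "gL (z, \<zeta>) \<bullet> F \<kappa> (z, \<zeta>) = fst (gL (z, \<zeta>)) \<bullet> sympJ (grad0 z)" .
      have "\<bar>fst (gL (z, \<zeta>)) \<bullet> sympJ (grad0 z)\<bar> \<le> norm (fst (gL (z, \<zeta>))) * norm (grad0 z)"
        using Cauchy_Schwarz_ineq2[of "fst (gL (z, \<zeta>))" "sympJ (grad0 z)"] by (simp add: sympJ_norm)
      also have "\<dots> \<le> (c2R * \<Lambda> z \<zeta>) * M"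
        using gLbnd[OF zR, of \<zeta>] gbnd[OF zR] c2R Lambda_nonneg[of z \<zeta>] by (intro mult_mono) auto
      finally have "\<kappa> * \<bar>gL (z, \<zeta>) \<bullet> F \<kappa> (z, \<zeta>)\<bar> \<le> \<kappa> * ((c2R * \<Lambda> z \<zeta>) * M)"
        using k eq by (intro mult_left_mono) auto
      also have "\<dots> = (M * c2R) * f \<kappa> t" by (simp add: f_def w)
      also have "\<dots> \<le> K * f \<kappa> t" using f_nn[OF that, of t] by (simp add: K_def mult_right_mono)
      finally show ?thesis using k w f_nn[OF that, of t] by (simp add: abs_mult)
    qed
    have fbnd: "f \<kappa> t \<le> f0 \<kappa> * exp (K * T)" if "\<kappa> \<ge> \<kappa>0" "\<bar>t\<bar> \<le> T" for \<kappa> t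
    proof -
      have "norm (f \<kappa> t) \<le> (norm (f \<kappa> 0) + 0 / K) * exp (K * T)"
        by (rule gronwall[OF K order_refl fd fdb[OF that(1)] that(2)])
      moreover have "f \<kappa> 0 = f0 \<kappa>" by (simp add: f_def f0_def \<gamma>0)
      ultimately show ?thesis using f0_nn[OF that(1)] by simp
    qed
    have dfst: "((\<lambda>s. fst (\<gamma> \<kappa> s)) has_vector_derivative fst (F \<kappa> (\<gamma> \<kappa> t))) (at t)" for \<kappa> t
      using has_derivative_fst[OF d\<gamma>[of \<kappa> t, unfolded has_vector_derivative_def]]
      unfolding has_vector_derivative_def by simp
    have zd: "norm (fst (\<gamma> \<kappa> t) - zc t) \<le> (norm (z0 \<kappa> - zinit) + c2R * f0 \<kappa> * exp (K * T) / L0) * exp (L0 * T)"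
      if \<kappa>: "\<kappa> \<ge> \<kappa>0" and t: "\<bar>t\<bar> \<le> T" for \<kappa> t
    proof -
      have b: "c2R * f0 \<kappa> * exp (K * T) \<ge> 0" using c2R f0_nn[OF \<kappa>] by simp
      have "norm ((\<lambda>s. fst (\<gamma> \<kappa> s) - zc s) t) \<le> (norm ((\<lambda>s. fst (\<gamma> \<kappa> s) - zc s) 0) + c2R * f0 \<kappa> * exp (K * T) / L0) * exp (L0 * T)"
      proof (rule gronwall[OF L0 b _ _ t])
        show "((\<lambda>s. fst (\<gamma> \<kappa> s) - zc s) has_vector_derivative fst (F \<kappa> (\<gamma> \<kappa> s)) - sympJ (grad0 (zc s))) (at s)" for s
          by (intro has_vector_derivative_diff dfst dzc)
        fix s assume s: "\<bar>s\<bar> \<le> T"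
        obtain z \<zeta> where w: "\<gamma> \<kappa> s = (z, \<zeta>)" by (metis surj_pair)
        have zR: "norm z \<le> R" using zbnd[OF \<kappa>, of s] w by simp
        have k: "\<kappa> > 0" using \<kappa> kappa0_pos by simp
        have "fst (F \<kappa> (z, \<zeta>)) - sympJ (grad0 (zc s)) = sympJ (grad0 z - grad0 (zc s)) + \<kappa> *\<^sub>R sympJ (fst (gL (z, \<zeta>)))"
          by (simp add: F_def Gk_def sympJ2_def sympJ_add sympJ_scaleR sympJ_diff[symmetric])
        then have "norm (fst (F \<kappa> (z, \<zeta>)) - sympJ (grad0 (zc s))) \<le> norm (grad0 z - grad0 (zc s)) + \<kappa> * norm (fst (gL (z, \<zeta>)))"
          using norm_triangle_ineq[of "sympJ (grad0 z - grad0 (zc s))" "\<kappa> *\<^sub>R sympJ (fst (gL (z, \<zeta>)))"] k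
          by (simp add: sympJ_norm)
        also have "\<dots> \<le> L0 * norm (z - zc s) + \<kappa> * (c2R * \<Lambda> z \<zeta>)"
          using lgrad0[of z "zc s"] gLbnd[OF zR, of \<zeta>] k by (intro add_mono mult_left_mono) auto
        also have "\<kappa> * (c2R * \<Lambda> z \<zeta>) = c2R * f \<kappa> s" by (simp add: f_def w)
        also have "c2R * f \<kappa> s \<le> c2R * (f0 \<kappa> * exp (K * T))"
          using fbnd[OF \<kappa> s] c2R by (intro mult_left_mono) auto
        finally show "norm (fst (F \<kappa> (\<gamma> \<kappa> s)) - sympJ (grad0 (zc s))) \<le> L0 * norm (fst (\<gamma> \<kappa> s) - zc s) + c2R * f0 \<kappa> * exp (K * T)"
          by (simp add: w mult.assoc)
      qed
      then show ?thesis by (simp add: \<gamma>0 zc0)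
    qed
    have t1: "((\<lambda>\<kappa>. norm (z0 \<kappa> - zinit)) \<longlongrightarrow> 0) at_top"
      by (rule tendsto_norm_zero[OF LIM_zero[OF init_conv]])
    have t2: "(f0 \<longlongrightarrow> 0) at_top" using init_Lambda by (simp add: f0_def[abs_def])
    have t3: "((\<lambda>\<kappa>. (Ac / \<kappa>) powr (1 / p)) \<longlongrightarrow> 0) at_top"
    proof (rule tendsto_zero_powrI[OF _ tendsto_const])
      show "((\<lambda>\<kappa>. Ac / \<kappa>) \<longlongrightarrow> 0) at_top"
        by (rule tendsto_divide_0[OF tendsto_const filterlim_at_top_imp_at_infinity[OF filterlim_ident]])
      show "\<forall>\<^sub>F \<kappa> in at_top. 0 \<le> Ac / \<kappa>"
        using eventually_ge_at_top[of "0::real"] by eventually_elim (use Ac in simp)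
      show "0 < 1 / p" using consts_pos by simp
    qed
    show "((\<lambda>\<kappa>. SUP t\<in>{-T..T}. norm (fst (\<gamma> \<kappa> t) - zc t) + norm (snd (\<gamma> \<kappa> t))) \<longlongrightarrow> 0) at_top"
    proof (rule sup_tendsto0)
      show "0 \<le> T" using T by simp
      show "\<forall>\<^sub>F \<kappa> in at_top. \<forall>t\<in>{-T..T}. 0 \<le> norm (fst (\<gamma> \<kappa> t) - zc t) + norm (snd (\<gamma> \<kappa> t)) \<and>
          norm (fst (\<gamma> \<kappa> t) - zc t) + norm (snd (\<gamma> \<kappa> t)) \<le>
          (norm (z0 \<kappa> - zinit) + c2R * f0 \<kappa> * exp (K * T) / L0) * exp (L0 * T) + (Ac / \<kappa>) powr (1 / p)"
        using eventually_ge_at_top[of \<kappa>0]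
      proof eventually_elim
        case (elim \<kappa>)
        show ?case
        proof
          fix t :: real assume "t \<in> {-T..T}"
          then have t: "\<bar>t\<bar> \<le> T" by auto
          show "0 \<le> norm (fst (\<gamma> \<kappa> t) - zc t) + norm (snd (\<gamma> \<kappa> t)) \<and>
            norm (fst (\<gamma> \<kappa> t) - zc t) + norm (snd (\<gamma> \<kappa> t)) \<le>
            (norm (z0 \<kappa> - zinit) + c2R * f0 \<kappa> * exp (K * T) / L0) * exp (L0 * T) + (Ac / \<kappa>) powr (1 / p)"
            using zd[OF elim t] \<zeta>bnd[OF elim, of t] by simp
        qed
      qed
      have "((\<lambda>\<kappa>. (norm (z0 \<kappa> - zinit) + c2R * f0 \<kappa> * exp (K * T) / L0) * exp (L0 * T) + (Ac / \<kappa>) powr (1 / p))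
          \<longlongrightarrow> (0 + c2R * 0 * exp (K * T) / L0) * exp (L0 * T) + 0) at_top"
        using L0 by (intro tendsto_intros t1 t2 t3) auto
      then show "((\<lambda>\<kappa>. (norm (z0 \<kappa> - zinit) + c2R * f0 \<kappa> * exp (K * T) / L0) * exp (L0 * T) + (Ac / \<kappa>) powr (1 / p))
          \<longlongrightarrow> 0) at_top" by simp
    qed
    show "((\<lambda>\<kappa>. SUP t\<in>{-T..T}. \<bar>H0 (fst (\<gamma> \<kappa> t)) - H0 (z0 \<kappa>)\<bar> + \<kappa> * \<Lambda> (fst (\<gamma> \<kappa> t)) (snd (\<gamma> \<kappa> t))) \<longlongrightarrow> 0) at_top"
    proof (rule sup_tendsto0)
      show "0 \<le> T" using T by simp
      show "\<forall>\<^sub>F \<kappa> in at_top. \<forall>t\<in>{-T..T}. 0 \<le> \<bar>H0 (fst (\<gamma> \<kappa> t)) - H0 (z0 \<kappa>)\<bar> + \<kappa> * \<Lambda> (fst (\<gamma> \<kappa> t)) (snd (\<gamma> \<kappa> t)) \<and>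
          \<bar>H0 (fst (\<gamma> \<kappa> t)) - H0 (z0 \<kappa>)\<bar> + \<kappa> * \<Lambda> (fst (\<gamma> \<kappa> t)) (snd (\<gamma> \<kappa> t)) \<le>
          f0 \<kappa> + 2 * (f0 \<kappa> * exp (K * T))"
        using eventually_ge_at_top[of \<kappa>0]
      proof eventually_elim
        case (elim \<kappa>)
        show ?case
        proof
          fix t :: real assume "t \<in> {-T..T}"
          then have t: "\<bar>t\<bar> \<le> T" by auto
          have e: "H0 (fst (\<gamma> \<kappa> t)) + f \<kappa> t = H0 (z0 \<kappa>) + f0 \<kappa>"
            using energy[of \<kappa> t] by (simp add: f_def f0_def)
          show "0 \<le> \<bar>H0 (fst (\<gamma> \<kappa> t)) - H0 (z0 \<kappa>)\<bar> + \<kappa> * \<Lambda> (fst (\<gamma> \<kappa> t)) (snd (\<gamma> \<kappa> t)) \<and>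
            \<bar>H0 (fst (\<gamma> \<kappa> t)) - H0 (z0 \<kappa>)\<bar> + \<kappa> * \<Lambda> (fst (\<gamma> \<kappa> t)) (snd (\<gamma> \<kappa> t)) \<le>
            f0 \<kappa> + 2 * (f0 \<kappa> * exp (K * T))"
            using e fbnd[OF elim t] f_nn[OF elim, of t] f0_nn[OF elim] unfolding f_def by linarith
        qed
      qed
      have "((\<lambda>\<kappa>. f0 \<kappa> + 2 * (f0 \<kappa> * exp (K * T))) \<longlongrightarrow> 0 + 2 * (0 * exp (K * T))) at_top"
        by (intro tendsto_intros t2)
      then show "((\<lambda>\<kappa>. f0 \<kappa> + 2 * (f0 \<kappa> * exp (K * T))) \<longlongrightarrow> 0) at_top" by simp
    qed
  qed
  qed
qed

end
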